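(* Let $(\Omega,\mathcal{F},\mathbb{P})$ be a probability space. The set $\mathbb{L}^0_+$ is locally convex for the $\mathbb{L}^0$-topology (every element has a neighbourhood base, for the relative $\mathbb{L}^0$-topology on $\mathbb{L}^0_+$, consisting of convex sets) if and only if the probability space is purely atomic. In this case, there exists a probability $\mathbb{Q}$ equivalent to $\mathbb{P}$ such that the $\mathbb{L}^0$-topology on $\mathbb{L}^0_+$ coincides with the $\mathbb{L}^1(\mathbb{Q})$-topology on $\mathbb{L}^0_+$ if and only if the probability space has only finitely many atoms (and then any $\mathbb{Q}$ equivalent to $\mathbb{P}$ works).
   Context: $\mathbb{L}^0$ is the space of (equivalence classes modulo $\mathbb{P}$-null sets of) real-valued random variables with the topology of convergence in probability, metrized by $(X,Y)\mapsto\mathbb{E}_{\mathbb{P}}[1\wedge|X-Y|]$; $\mathbb{L}^0_+$ are its nonnegative elements. *)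

theory Defs
  imports "HOL-Probability.Probability"
begin

text \<open>Random variables are represented by real-valued functions on the sample space;
  all notions below are invariant under modification on null sets, so working with
  representatives is equivalent to working with equivalence classes.\<close>

definition L0 :: "'a measure \<Rightarrow> ('a \<Rightarrow> real) set" where
  "L0 M = borel_measurable M"

definition L0_plus :: "'a measure \<Rightarrow> ('a \<Rightarrow> real) set" where
  "L0_plus M = {X \<in> borel_measurable M. AE \<omega> in M. 0 \<le> X \<omega>}"

definition dist_L0 :: "'a measure \<Rightarrow> ('a \<Rightarrow> real) \<Rightarrow> ('a \<Rightarrow> real) \<Rightarrow> ennreal" where
  "dist_L0 M X Y = (\<integral>\<^sup>+ \<omega>. ennreal (min 1 \<bar>X \<omega> - Y \<omega>\<bar>) \<partial>M)"

definition dist_L1 :: "'a measure \<Rightarrow> ('a \<Rightarrow> real) \<Rightarrow> ('a \<Rightarrow> real) \<Rightarrow> ennreal" where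
  "dist_L1 Q X Y = (\<integral>\<^sup>+ \<omega>. ennreal \<bar>X \<omega> - Y \<omega>\<bar> \<partial>Q)"

definition open_rel :: "('f \<Rightarrow> 'f \<Rightarrow> ennreal) \<Rightarrow> 'f set \<Rightarrow> 'f set \<Rightarrow> bool" where
  "open_rel d S U \<longleftrightarrow> U \<subseteq> S \<and>
     (\<forall>X\<in>U. \<exists>e::real. e > 0 \<and> {Y \<in> S. d X Y < ennreal e} \<subseteq> U)"

definition nbhd_rel :: "('f \<Rightarrow> 'f \<Rightarrow> ennreal) \<Rightarrow> 'f set \<Rightarrow> 'f \<Rightarrow> 'f set \<Rightarrow> bool" where
  "nbhd_rel d S X N \<longleftrightarrow> N \<subseteq> S \<and> (\<exists>V. open_rel d S V \<and> X \<in> V \<and> V \<subseteq> N)"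

definition convex_fun_set :: "('a \<Rightarrow> real) set \<Rightarrow> bool" where
  "convex_fun_set C \<longleftrightarrow>
     (\<forall>X\<in>C. \<forall>Y\<in>C. \<forall>t::real. 0 \<le> t \<and> t \<le> 1 \<longrightarrow> (\<lambda>\<omega>. t * X \<omega> + (1 - t) * Y \<omega>) \<in> C)"

definition L0_plus_locally_convex :: "'a measure \<Rightarrow> bool" where
  "L0_plus_locally_convex M \<longleftrightarrow>
     (\<forall>X\<in>L0_plus M. \<forall>N. nbhd_rel (dist_L0 M) (L0_plus M) X N \<longrightarrow>
        (\<exists>C. convex_fun_set C \<and> nbhd_rel (dist_L0 M) (L0_plus M) X C \<and> C \<subseteq> N))"

definition is_atom :: "'a measure \<Rightarrow> 'a set \<Rightarrow> bool" where
  "is_atom M A \<longleftrightarrow> A \<in> sets M \<and> measure M A > 0 \<and>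
     (\<forall>B\<in>sets M. B \<subseteq> A \<longrightarrow> measure M B = 0 \<or> measure M B = measure M A)"

definition purely_atomic :: "'a measure \<Rightarrow> bool" where
  "purely_atomic M \<longleftrightarrow>
     (\<forall>A\<in>sets M. measure M A > 0 \<longrightarrow> (\<exists>B. B \<subseteq> A \<and> is_atom M B))"

definition finitely_many_atoms :: "'a measure \<Rightarrow> bool" where
  "finitely_many_atoms M \<longleftrightarrow>
     (\<exists>F. finite F \<and> (\<forall>B\<in>F. is_atom M B) \<and>
        (\<forall>A. is_atom M A \<longrightarrow> (\<exists>B\<in>F. measure M (A - B) = 0 \<and> measure M (B - A) = 0)))"

definition equivalent_prob :: "'a measure \<Rightarrow> 'a measure \<Rightarrow> bool" where
  "equivalent_prob Q M \<longleftrightarrow> prob_space Q \<and> sets Q = sets M \<and>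
     (\<forall>A\<in>sets M. emeasure Q A = 0 \<longleftrightarrow> emeasure M A = 0)"

definition topologies_coincide_L0_L1 :: "'a measure \<Rightarrow> 'a measure \<Rightarrow> bool" where
  "topologies_coincide_L0_L1 M Q \<longleftrightarrow>
     (\<forall>U. open_rel (dist_L0 M) (L0_plus M) U \<longleftrightarrow> open_rel (dist_L1 Q) (L0_plus M) U)"

end

theory Submission
  imports Defs
begin



lemma (in prob_space) exhaust:
  assumes A: "A \<in> sets M" and G: "G \<subseteq> sets M" "\<forall>B\<in>G. B \<subseteq> A"
  and H: "\<And>B. B \<in> sets M \<Longrightarrow> B \<subseteq> A \<Longrightarrow> measure M B > 0 \<Longrightarrow> \<exists>C\<in>G. C \<subseteq> B \<and> measure M C > 0"
  and e: "e > 0"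
  shows "\<exists>F. finite F \<and> F \<subseteq> G \<and> measure M (\<Union>F) > measure M A - e"
proof (rule ccontr)
  assume neg: "\<not> ?thesis"
  define S where "S = {measure M (\<Union>F) | F. finite F \<and> F \<subseteq> G}"
  have S0: "0 \<in> S" unfolding S_def by (rule CollectI, rule exI[of _ "{}"]) auto
  have Sle: "x \<le> measure M A - e" if "x \<in> S" for x using that neg unfolding S_def by force
  have bdd: "bdd_above S" by (rule bdd_aboveI, rule Sle)
  define s where "s = Sup S"
  have s_le: "s \<le> measure M A - e" unfolding s_def using S0 Sle by (intro cSup_least) auto
  have upper: "measure M (\<Union>F) \<le> s" if "finite F" "F \<subseteq> G" for F
    unfolding s_def using that bdd by (intro cSup_upper) (auto simp: S_def)
  have "\<exists>F. finite F \<and> F \<subseteq> G \<and> measure M (\<Union>F) > s - 1 / Suc n" for n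
  proof -
    have "s - 1 / Suc n < Sup S" unfolding s_def by simp
    then obtain x where "x \<in> S" "s - 1 / Suc n < x" using less_cSup_iff[OF _ bdd] S0 by blast
    then show ?thesis unfolding S_def by blast
  qed
  then obtain Fn where Fn: "\<And>n. finite (Fn n) \<and> Fn n \<subseteq> G \<and> measure M (\<Union>(Fn n)) > s - 1 / Suc n"
    by metis
  define Gn where "Gn n = (\<Union>m\<le>n. Fn m)" for n
  have Gfin: "finite (Gn n)" "Gn n \<subseteq> G" for n unfolding Gn_def using Fn by auto
  have Gsets: "\<Union>(Gn n) \<in> sets M" for n using Gfin[of n] G by (intro sets.finite_Union) auto
  have Gup: "measure M (\<Union>(Gn n)) \<le> s" for n using upper Gfin by auto
  have Glow: "measure M (\<Union>(Gn n)) > s - 1 / Suc n" for n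
  proof -
    have "\<Union>(Fn n) \<subseteq> \<Union>(Gn n)" unfolding Gn_def by auto
    then have "measure M (\<Union>(Fn n)) \<le> measure M (\<Union>(Gn n))"
      using Gsets by (intro finite_measure_mono) auto
    then show ?thesis using Fn[of n] by linarith
  qed
  define U where "U = (\<Union>n. \<Union>(Gn n))"
  have inc: "incseq (\<lambda>n. \<Union>(Gn n))" unfolding incseq_def Gn_def by (intro allI impI Union_mono UN_mono) auto
  have lim: "(\<lambda>n. measure M (\<Union>(Gn n))) \<longlonglongrightarrow> measure M U"
    unfolding U_def using Gsets inc by (intro finite_Lim_measure_incseq) auto
  have Us: "U \<in> sets M" unfolding U_def using Gsets by auto
  have "measure M U \<le> s" using lim Gup by (intro LIMSEQ_le_const2) auto
  have UA: "U \<subseteq> A" unfolding U_def using Gfin G(2) by blast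
  have "measure M (A - U) = measure M A - measure M U"
    using Us A UA by (intro finite_measure_Diff) auto
  then have "measure M (A - U) > 0" using \<open>measure M U \<le> s\<close> s_le e by linarith
  then obtain C where C: "C \<in> G" "C \<subseteq> A - U" "measure M C > 0" using H[of "A - U"] A Us by auto
  obtain n where n: "1 / Suc n < measure M C" using C(3) by (metis reals_Archimedean inverse_eq_divide)
  have "measure M (\<Union>(insert C (Gn n))) \<le> s" using Gfin[of n] C(1) by (intro upper) auto
  moreover have "\<Union>(insert C (Gn n)) = C \<union> \<Union>(Gn n)" by auto
  moreover have "measure M (C \<union> \<Union>(Gn n)) = measure M C + measure M (\<Union>(Gn n))"
  proof (rule finite_measure_Union)
    show "C \<in> sets M" using C G by auto
    show "\<Union>(Gn n) \<in> sets M" by (rule Gsets)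
    show "C \<inter> \<Union>(Gn n) = {}" using C(2) unfolding U_def by auto
  qed
  ultimately have "measure M C + measure M (\<Union>(Gn n)) \<le> s" by simp
  then show False using Glow[of n] n by linarith
qed



lemma (in prob_space) small_subset:
  assumes noatom: "\<forall>B. B \<subseteq> A \<longrightarrow> \<not> is_atom M B"
  and B: "B \<in> sets M" "B \<subseteq> A" "measure M B > 0" and r: "r > 0"
  shows "\<exists>C\<in>sets M. C \<subseteq> B \<and> 0 < measure M C \<and> measure M C < r"
proof -
  have step: "\<exists>C\<in>sets M. C \<subseteq> B \<and> 0 < measure M C \<and> measure M C \<le> measure M B / 2^k" for k
  proof (induction k)
    case 0
    show ?case using B by (intro bexI[of _ B]) auto
  next
    case (Suc k)
    then obtain C where C: "C \<in> sets M" "C \<subseteq> B" "0 < measure M C" "measure M C \<le> measure M B / 2^k"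
      by blast
    have "\<not> is_atom M C" using noatom C(2) B(2) by blast
    then obtain D where D: "D \<in> sets M" "D \<subseteq> C" "measure M D \<noteq> 0" "measure M D \<noteq> measure M C"
      unfolding is_atom_def using C by blast
    have "measure M D \<le> measure M C" using D C by (intro finite_measure_mono) auto
    then have Dlt: "0 < measure M D" "measure M D < measure M C" using D(3,4) measure_nonneg[of M D] by linarith+
    have CD: "measure M (C - D) = measure M C - measure M D" using C D by (intro finite_measure_Diff) auto
    have h: "measure M C / 2 \<le> measure M B / 2 ^ Suc k" using divide_right_mono[OF C(4), of 2] by simp
    show ?case
    proof (cases "measure M D \<le> measure M C / 2")
      case True
      then have "measure M D \<le> measure M B / 2 ^ Suc k" using h by linarith
      then show ?thesis using D C Dlt by (intro bexI[of _ D]) auto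
    next
      case False
      then have "measure M (C - D) \<le> measure M B / 2 ^ Suc k" using h CD by linarith
      moreover have "0 < measure M (C - D)" using CD Dlt by linarith
      ultimately show ?thesis using D C by (intro bexI[of _ "C - D"]) auto
    qed
  qed
  obtain k where k: "measure M B / r < 2 ^ k" using real_arch_pow[of 2 "measure M B / r"] by auto
  then have "measure M B / 2^k < r" using r by (simp add: field_simps)
  moreover obtain C where "C\<in>sets M" "C \<subseteq> B" "0 < measure M C" "measure M C \<le> measure M B / 2^k" using step[of k] by blast
  ultimately show ?thesis by (intro bexI[of _ C]) auto
qed



lemma avg_aux: fixes k a s :: real assumes "k > 0"
  shows "(1/(k+1)) * a + (1 - 1/(k+1)) * (s/k) = (a + s)/(k+1)"
proof -
  have k1: "k + 1 > 0" using assms by simp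
  have "1 - 1/(k+1) = k/(k+1)" using k1 by (simp add: field_simps)
  moreover have "k/(k+1) * (s/k) = s/(k+1)" using assms by simp
  ultimately show ?thesis by (simp add: add_divide_distrib)
qed

lemma convex_avg:
  assumes "convex_fun_set C" "finite F" "F \<noteq> {}" "\<forall>i\<in>F. g i \<in> C"
  shows "(\<lambda>\<omega>. (\<Sum>i\<in>F. g i \<omega>) / real (card F)) \<in> C"
  using assms(2,3,4)
proof (induction F rule: finite_ne_induct)
  case (singleton x)
  then show ?case by simp
next
  case (insert x F)
  define k where "k = real (card F)"
  have kpos: "k > 0" using insert unfolding k_def by (simp add: card_gt_0_iff)
  define t where "t = 1 / (k + 1)"
  have t: "0 \<le> t" "t \<le> 1" using kpos unfolding t_def by auto
  have IH: "(\<lambda>\<omega>. (\<Sum>i\<in>F. g i \<omega>) / k) \<in> C" using insert unfolding k_def by auto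
  have "(\<lambda>\<omega>. t * g x \<omega> + (1 - t) * ((\<Sum>i\<in>F. g i \<omega>) / k)) \<in> C"
  proof -
    have cv: "\<And>X Y t. X\<in>C \<Longrightarrow> Y\<in>C \<Longrightarrow> 0\<le>t \<Longrightarrow> t\<le>1 \<Longrightarrow> (\<lambda>\<omega>. t*X \<omega> + (1-t)*Y \<omega>) \<in> C"
      using assms(1) unfolding convex_fun_set_def by blast
    have gx: "g x \<in> C" using insert.prems by simp
    show ?thesis by (rule cv[OF gx IH t])
  qed
  moreover have "(\<lambda>\<omega>. t * g x \<omega> + (1 - t) * ((\<Sum>i\<in>F. g i \<omega>) / k))
      = (\<lambda>\<omega>. (\<Sum>i\<in>insert x F. g i \<omega>) / real (card (insert x F)))"
  proof (rule ext)
    fix \<omega>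
    have "t * g x \<omega> + (1 - t) * ((\<Sum>i\<in>F. g i \<omega>) / k) = (g x \<omega> + (\<Sum>i\<in>F. g i \<omega>)) / (k + 1)"
      unfolding t_def by (rule avg_aux[OF kpos])
    also have "\<dots> = (\<Sum>i\<in>insert x F. g i \<omega>) / real (card (insert x F))"
      using insert unfolding k_def by (simp add: add.commute)
    finally show "t * g x \<omega> + (1 - t) * ((\<Sum>i\<in>F. g i \<omega>) / k) = (\<Sum>i\<in>insert x F. g i \<omega>) / real (card (insert x F))" .
  qed
  ultimately show ?case by simp
qed



lemma ball_open:
  assumes tri: "\<And>x y z. x\<in>S \<Longrightarrow> y\<in>S \<Longrightarrow> z\<in>S \<Longrightarrow> d x z \<le> d x y + d y z" and X: "X \<in> S"
  shows "open_rel d S {Y\<in>S. d X Y < ennreal e}"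
  unfolding open_rel_def
proof (intro conjI ballI)
  fix Y assume Y: "Y \<in> {Y\<in>S. d X Y < ennreal e}"
  define a where "a = d X Y"
  have atop: "a \<noteq> top" using Y unfolding a_def by (auto simp: top_unique)
  have aeq: "a = ennreal (enn2real a)" using atop by (simp add: less_top)
  have alt: "enn2real a < e" using Y aeq unfolding a_def
    by (metis (mono_tags, lifting) ennreal_less_iff enn2real_nonneg less_le_trans mem_Collect_eq not_le ennreal_neg)
  define e' where "e' = e - enn2real a"
  have e': "e' > 0" using alt unfolding e'_def by simp
  have "{Z \<in> S. d Y Z < ennreal e'} \<subseteq> {Y\<in>S. d X Y < ennreal e}"
  proof safe
    fix Z assume Z: "Z \<in> S" "d Y Z < ennreal e'"
    have "d X Z \<le> a + d Y Z" using tri[of X Y Z] X Y Z unfolding a_def by auto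
    also have "\<dots> < a + ennreal e'" using Z atop by (simp add: ennreal_add_left_cancel_less)
    also have "\<dots> = ennreal e" using aeq e' unfolding e'_def
      by (metis add.commute diff_add_cancel enn2real_nonneg ennreal_plus less_eq_real_def)
    finally show "d X Z < ennreal e" .
  qed
  then show "\<exists>e'>0. {Z \<in> S. d Y Z < ennreal e'} \<subseteq> {Y\<in>S. d X Y < ennreal e}" using e' by blast
qed auto



lemma dist_L0_triangle:
  assumes "X \<in> borel_measurable M" "Y \<in> borel_measurable M" "Z \<in> borel_measurable M"
  shows "dist_L0 M X Z \<le> dist_L0 M X Y + dist_L0 M Y Z"
proof -
  have "dist_L0 M X Y + dist_L0 M Y Z =
     (\<integral>\<^sup>+ \<omega>. ennreal (min 1 \<bar>X \<omega> - Y \<omega>\<bar>) + ennreal (min 1 \<bar>Y \<omega> - Z \<omega>\<bar>) \<partial>M)"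
    unfolding dist_L0_def using assms by (intro nn_integral_add[symmetric]) auto
  also have "\<dots> \<ge> dist_L0 M X Z" unfolding dist_L0_def
    by (intro nn_integral_mono) (auto simp: ennreal_plus[symmetric] simp del: ennreal_plus intro!: ennreal_leI)
  finally show ?thesis .
qed



lemma dist_L1_triangle:
  assumes "X \<in> borel_measurable M" "Y \<in> borel_measurable M" "Z \<in> borel_measurable M"
  shows "dist_L1 M X Z \<le> dist_L1 M X Y + dist_L1 M Y Z"
proof -
  have "dist_L1 M X Y + dist_L1 M Y Z =
     (\<integral>\<^sup>+ \<omega>. ennreal \<bar>X \<omega> - Y \<omega>\<bar> + ennreal \<bar>Y \<omega> - Z \<omega>\<bar> \<partial>M)"
    unfolding dist_L1_def using assms by (intro nn_integral_add[symmetric]) auto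
  also have "\<dots> \<ge> dist_L1 M X Z" unfolding dist_L1_def
    by (intro nn_integral_mono) (auto simp: ennreal_plus[symmetric] simp del: ennreal_plus intro!: ennreal_leI)
  finally show ?thesis .
qed





lemma (in prob_space) not_pa_not_lc:
  assumes "\<not> purely_atomic M" shows "\<not> L0_plus_locally_convex M"
proof
  assume LC: "L0_plus_locally_convex M"
  obtain A where A: "A \<in> sets M" "measure M A > 0" "\<forall>B. B \<subseteq> A \<longrightarrow> \<not> is_atom M B"
    using assms unfolding purely_atomic_def by blast
  define S where "S = L0_plus M"
  define z where "z = (\<lambda>_::'a. 0::real)"
  have zS: "z \<in> S" unfolding S_def L0_plus_def z_def by auto
  have SB: "S \<subseteq> borel_measurable M" unfolding S_def L0_plus_def by auto
  have tri: "\<And>x y w. x\<in>S \<Longrightarrow> y\<in>S \<Longrightarrow> w\<in>S \<Longrightarrow> dist_L0 M x w \<le> dist_L0 M x y + dist_L0 M y w"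
    using SB by (intro dist_L0_triangle) auto
  define N where "N = {Y\<in>S. dist_L0 M z Y < ennreal (measure M A / 2)}"
  have d00: "dist_L0 M z z = 0" unfolding dist_L0_def z_def by simp
  have Nn: "nbhd_rel (dist_L0 M) S z N"
    unfolding nbhd_rel_def
  proof (intro conjI exI[of _ N])
    show "N \<subseteq> S" unfolding N_def by auto
    show "open_rel (dist_L0 M) S N" unfolding N_def by (rule ball_open[OF tri zS])
    show "z \<in> N" unfolding N_def using zS d00 A(2) by auto
  qed auto
  obtain C where C: "convex_fun_set C" "nbhd_rel (dist_L0 M) S z C" "C \<subseteq> N"
    using LC zS Nn unfolding L0_plus_locally_convex_def S_def by blast
  obtain V where V: "open_rel (dist_L0 M) S V" "z \<in> V" "V \<subseteq> C" using C(2) unfolding nbhd_rel_def by blast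
  obtain r where r: "r > 0" "{Y\<in>S. dist_L0 M z Y < ennreal r} \<subseteq> V" using V unfolding open_rel_def by blast
  define G where "G = {B\<in>sets M. B \<subseteq> A \<and> measure M B < r}"
  have H: "\<exists>C\<in>G. C \<subseteq> B \<and> measure M C > 0" if hB: "B \<in> sets M" "B \<subseteq> A" "measure M B > 0" for B
  proof -
    obtain C where "C\<in>sets M" "C \<subseteq> B" "0 < measure M C" "measure M C < r"
      using small_subset[OF A(3) hB r(1)] by blast
    then show ?thesis using hB unfolding G_def by (intro bexI[of _ C]) auto
  qed
  have "\<exists>F. finite F \<and> F \<subseteq> G \<and> measure M (\<Union>F) > measure M A - measure M A / 2"
  proof (rule exhaust[OF A(1) _ _ H])
    show "G \<subseteq> sets M" unfolding G_def by blast
    show "\<forall>B\<in>G. B \<subseteq> A" unfolding G_def by blast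
    show "measure M A / 2 > 0" using A(2) by simp
  qed
  then obtain F where F: "finite F" "F \<subseteq> G" "measure M (\<Union>F) > measure M A - measure M A / 2"
    by blast
  have FU: "\<Union>F \<in> sets M" using F unfolding G_def by (intro sets.finite_Union) auto
  have Fne: "F \<noteq> {}" using F(3) A(2) by auto
  define n where "n = real (card F)"
  have npos: "n > 0" using F(1) Fne unfolding n_def by (simp add: card_gt_0_iff)
  define g where "g B = (\<lambda>\<omega>. n * indicator B \<omega>)" for B :: "'a set"
  have gC: "\<forall>B\<in>F. g B \<in> C"
  proof
    fix B assume B: "B \<in> F"
    then have Bs: "B \<in> sets M" "measure M B < r" using F(2) unfolding G_def by auto
    have gS: "g B \<in> S" unfolding S_def L0_plus_def g_def using Bs npos by auto
    have "dist_L0 M z (g B) \<le> (\<integral>\<^sup>+\<omega>. indicator B \<omega> \<partial>M)"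
      unfolding dist_L0_def z_def g_def
      by (intro nn_integral_mono) (auto split: split_indicator)
    also have "\<dots> = ennreal (measure M B)" using Bs by (simp add: emeasure_eq_measure)
    also have "\<dots> < ennreal r" using Bs r by (simp add: ennreal_lessI)
    finally have "dist_L0 M z (g B) < ennreal r" .
    then show "g B \<in> C" using gS r V by auto
  qed
  have "(\<lambda>\<omega>. (\<Sum>B\<in>F. g B \<omega>) / real (card F)) \<in> C"
    by (rule convex_avg[OF C(1) F(1) Fne gC])
  moreover have "(\<lambda>\<omega>. (\<Sum>B\<in>F. g B \<omega>) / real (card F)) = (\<lambda>\<omega>. \<Sum>B\<in>F. indicator B \<omega>)"
    using npos unfolding g_def n_def[symmetric] by (simp add: sum_distrib_left[symmetric])
  ultimately have YN: "(\<lambda>\<omega>. \<Sum>B\<in>F. indicator B \<omega> :: real) \<in> N" using C(3) by auto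
  have "ennreal (measure M (\<Union>F)) = (\<integral>\<^sup>+\<omega>. indicator (\<Union>F) \<omega> \<partial>M)"
    using FU by (simp add: emeasure_eq_measure)
  also have "\<dots> \<le> dist_L0 M z (\<lambda>\<omega>. \<Sum>B\<in>F. indicator B \<omega> :: real)"
    unfolding dist_L0_def z_def
  proof (intro nn_integral_mono)
    fix \<omega> assume "\<omega> \<in> space M"
    show "indicator (\<Union>F) \<omega> \<le> ennreal (min 1 \<bar>0 - (\<Sum>B\<in>F. indicator B \<omega> :: real)\<bar>)"
    proof (cases "\<omega> \<in> \<Union>F")
      case True
      then obtain B where B: "B \<in> F" "\<omega> \<in> B" by auto
      have "indicator B \<omega> \<le> (\<Sum>B\<in>F. indicator B \<omega> :: real)"
        using B F(1) by (intro member_le_sum) auto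
      then have "1 \<le> (\<Sum>B\<in>F. indicator B \<omega> :: real)" using B by simp
      then show ?thesis using True by simp
    next
      case False
      then show ?thesis by simp
    qed
  qed
  also have "\<dots> < ennreal (measure M A / 2)" using YN unfolding N_def by auto
  finally have "measure M (\<Union>F) < measure M A / 2"
    by (simp add: ennreal_less_iff)
  then show False using F(3) by linarith
qed



lemma conv_abs_lt:
  fixes t y z x d :: real
  assumes "0 \<le> t" "t \<le> 1" "\<bar>y - x\<bar> < d" "\<bar>z - x\<bar> < d"
  shows "\<bar>t * y + (1 - t) * z - x\<bar> < d"
proof -
  have eq: "t * y + (1 - t) * z - x = t * (y - x) + (1 - t) * (z - x)" by (simp add: algebra_simps)
  have "\<bar>t * (y - x) + (1 - t) * (z - x)\<bar> \<le> t * \<bar>y - x\<bar> + (1 - t) * \<bar>z - x\<bar>"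
    using assms(1,2) by (metis abs_mult abs_of_nonneg abs_triangle_ineq diff_ge_0_iff_ge)
  also have "\<dots> < d"
  proof (cases "t = 0")
    case True then show ?thesis using assms by simp
  next
    case False
    then have "t * \<bar>y - x\<bar> < t * d" using assms by simp
    moreover have "(1 - t) * \<bar>z - x\<bar> \<le> (1 - t) * d" using assms by (intro mult_left_mono) auto
    ultimately show ?thesis by (simp add: algebra_simps)
  qed
  finally show ?thesis using eq by simp
qed

lemma markov_aux:
  assumes u: "u \<in> borel_measurable M" and D: "D \<in> borel_measurable M"
    and h: "\<And>\<omega>. \<omega> \<in> space M \<Longrightarrow> \<eta> \<le> D \<omega> \<Longrightarrow> \<eta> \<le> u \<omega>"
  shows "ennreal \<eta> * emeasure M {\<omega>\<in>space M. \<eta> \<le> D \<omega>} \<le> (\<integral>\<^sup>+\<omega>. ennreal (u \<omega>) \<partial>M)"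
proof -
  have E: "{\<omega>\<in>space M. \<eta> \<le> D \<omega>} \<in> sets M" using D by measurable
  have "ennreal \<eta> * emeasure M {\<omega>\<in>space M. \<eta> \<le> D \<omega>} = (\<integral>\<^sup>+\<omega>. ennreal \<eta> * indicator {\<omega>\<in>space M. \<eta> \<le> D \<omega>} \<omega> \<partial>M)"
    using E by (simp add: nn_integral_cmult_indicator)
  also have "\<dots> \<le> (\<integral>\<^sup>+\<omega>. ennreal (u \<omega>) \<partial>M)"
    by (intro nn_integral_mono) (auto split: split_indicator intro!: ennreal_leI h)
  finally show ?thesis .
qed

lemma (in prob_space) atom_margin:
  fixes f :: "'a \<Rightarrow> real"
  assumes B: "is_atom M B" and f: "f \<in> borel_measurable M" and AE: "AE \<omega> in M. \<omega> \<in> B \<longrightarrow> f \<omega> < c"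
  shows "\<exists>\<eta>>0. AE \<omega> in M. \<omega> \<in> B \<longrightarrow> f \<omega> < c - \<eta>"
proof -
  have Bs: "B \<in> sets M" "measure M B > 0" using B unfolding is_atom_def by auto
  define E where "E n = {\<omega>\<in>space M. \<omega> \<in> B \<and> c - 1 / real (Suc n) \<le> f \<omega>}" for n :: nat
  have Es: "E n \<in> sets M" for n unfolding E_def using f Bs(1) by measurable
  have dec: "decseq E"
  proof (rule decseq_SucI)
    fix n
    have "c - 1 / real (Suc n) \<le> c - 1 / real (Suc (Suc n))" by (simp add: frac_le)
    then show "E (Suc n) \<subseteq> E n" unfolding E_def by auto
  qed
  have lim: "(\<lambda>n. measure M (E n)) \<longlonglongrightarrow> measure M (\<Inter>n. E n)"
    using Es dec by (intro finite_Lim_measure_decseq) auto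
  define Z where "Z = {\<omega>\<in>space M. \<omega> \<in> B \<and> c \<le> f \<omega>}"
  have Zs: "Z \<in> sets M" unfolding Z_def using f Bs(1) by measurable
  have Z0: "emeasure M Z = 0"
  proof -
    have "AE \<omega> in M. \<omega> \<notin> Z" using AE unfolding Z_def by eventually_elim auto
    moreover have "{x\<in>space M. \<not> (x \<notin> Z)} = Z" using sets.sets_into_space[OF Zs] by auto
    ultimately show ?thesis using AE_iff_measurable[OF Zs, of "\<lambda>x. x \<notin> Z"] by simp
  qed
  have sub: "(\<Inter>n. E n) \<subseteq> Z"
  proof
    fix \<omega> assume w: "\<omega> \<in> (\<Inter>n. E n)"
    have "c \<le> f \<omega>"
    proof (rule ccontr)
      assume "\<not> c \<le> f \<omega>"
      then obtain n where "inverse (real (Suc n)) < c - f \<omega>" using reals_Archimedean[of "c - f \<omega>"] by auto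
      moreover have "c - 1 / real (Suc n) \<le> f \<omega>" using w unfolding E_def by auto
      ultimately show False by (simp add: inverse_eq_divide)
    qed
    then show "\<omega> \<in> Z" using w unfolding E_def Z_def by auto
  qed
  have "measure M (\<Inter>n. E n) \<le> measure M Z" using sub Zs by (intro finite_measure_mono) auto
  moreover have "measure M Z = 0" using Z0 by (simp add: emeasure_eq_measure)
  ultimately have "measure M (\<Inter>n. E n) = 0" using measure_nonneg[of M "\<Inter>n. E n"] by linarith
  with lim have "eventually (\<lambda>n. measure M (E n) < measure M B) sequentially"
    using Bs(2) by (intro order_tendstoD(2)) auto
  then obtain n where n: "measure M (E n) < measure M B" by (auto simp: eventually_sequentially)
  have "E n \<subseteq> B" unfolding E_def by auto
  then have "measure M (E n) = 0" using B Es[of n] n unfolding is_atom_def by force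
  then have En: "E n \<in> null_sets M" using Es[of n] by (simp add: emeasure_eq_measure null_sets_def)
  have "AE \<omega> in M. \<omega> \<in> B \<longrightarrow> f \<omega> < c - 1 / real (Suc n)"
    by (rule AE_I'[OF En]) (auto simp: E_def not_less)
  then show ?thesis by (intro exI[of _ "1 / real (Suc n)"]) auto
qed



lemma (in prob_space) pa_lc:
  assumes PA: "purely_atomic M" shows "L0_plus_locally_convex M"
  unfolding L0_plus_locally_convex_def
proof (intro ballI allI impI)
  fix X N assume X: "X \<in> L0_plus M" and Nn: "nbhd_rel (dist_L0 M) (L0_plus M) X N"
  define S where "S = L0_plus M"
  have SB: "\<And>Y. Y\<in>S \<Longrightarrow> Y \<in> borel_measurable M" unfolding S_def L0_plus_def by auto
  have XS: "X \<in> S" using X unfolding S_def .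
  obtain V where V: "N \<subseteq> S" "open_rel (dist_L0 M) S V" "X \<in> V" "V \<subseteq> N"
    using Nn unfolding nbhd_rel_def S_def by blast
  obtain e where e: "e > 0" "{Y\<in>S. dist_L0 M X Y < ennreal e} \<subseteq> V"
    using V(2,3) unfolding open_rel_def by blast
  define G where "G = {B. is_atom M B}"
  have "\<exists>F. finite F \<and> F \<subseteq> G \<and> measure M (\<Union>F) > measure M (space M) - e/2"
  proof (rule exhaust[OF sets.top])
    show "G \<subseteq> sets M" unfolding G_def is_atom_def by blast
    show "\<forall>B\<in>G. B \<subseteq> space M" unfolding G_def is_atom_def using sets.sets_into_space by blast
    show "e/2 > 0" using e by simp
    fix B assume "B \<in> sets M" "B \<subseteq> space M" "measure M B > 0"
    then obtain C where "C \<subseteq> B" "is_atom M C" using PA unfolding purely_atomic_def by blast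
    then show "\<exists>C\<in>G. C \<subseteq> B \<and> measure M C > 0" unfolding G_def is_atom_def by blast
  qed
  then obtain F where F: "finite F" "F \<subseteq> G" "measure M (\<Union>F) > measure M (space M) - e/2"
    by blast
  have Fat: "\<And>B. B\<in>F \<Longrightarrow> is_atom M B" using F(2) unfolding G_def by auto
  have Fs: "\<And>B. B\<in>F \<Longrightarrow> B\<in>sets M" using Fat unfolding is_atom_def by auto
  define U where "U = \<Union>F"
  have Us: "U \<in> sets M" unfolding U_def using F(1) Fs by (intro sets.finite_Union) auto
  have mU: "measure M U > 1 - e/2" using F(3) prob_space unfolding U_def by simp
  define \<delta> where "\<delta> = e/4"
  have \<delta>: "\<delta> > 0" unfolding \<delta>_def using e by simp
  define C where "C = {Y\<in>S. \<forall>B\<in>F. AE \<omega> in M. \<omega>\<in>B \<longrightarrow> \<bar>Y \<omega> - X \<omega>\<bar> < \<delta>}"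
  have CS: "C \<subseteq> S" unfolding C_def by auto
  have convC: "convex_fun_set C"
    unfolding convex_fun_set_def
  proof (intro ballI allI impI)
    fix Y Z and t :: real assume Y: "Y\<in>C" and Z: "Z\<in>C" and t: "0 \<le> t \<and> t \<le> 1"
    have YS: "Y \<in> S" and ZS: "Z \<in> S" using Y Z CS by auto
    have Ym: "Y \<in> borel_measurable M" and Zm: "Z \<in> borel_measurable M" using SB YS ZS by auto
    have WS: "(\<lambda>\<omega>. t * Y \<omega> + (1 - t) * Z \<omega>) \<in> S" unfolding S_def L0_plus_def
    proof (intro CollectI conjI)
      show "(\<lambda>\<omega>. t * Y \<omega> + (1 - t) * Z \<omega>) \<in> borel_measurable M" using Ym Zm by measurable
      have "AE \<omega> in M. 0 \<le> Y \<omega>" "AE \<omega> in M. 0 \<le> Z \<omega>" using YS ZS unfolding S_def L0_plus_def by auto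
      then show "AE \<omega> in M. 0 \<le> t * Y \<omega> + (1 - t) * Z \<omega>"
        by eventually_elim (use t in \<open>auto intro!: add_nonneg_nonneg mult_nonneg_nonneg\<close>)
    qed
    moreover have "\<forall>B\<in>F. AE \<omega> in M. \<omega>\<in>B \<longrightarrow> \<bar>t * Y \<omega> + (1 - t) * Z \<omega> - X \<omega>\<bar> < \<delta>"
    proof
      fix B assume "B\<in>F"
      then have "AE \<omega> in M. \<omega>\<in>B \<longrightarrow> \<bar>Y \<omega> - X \<omega>\<bar> < \<delta>" "AE \<omega> in M. \<omega>\<in>B \<longrightarrow> \<bar>Z \<omega> - X \<omega>\<bar> < \<delta>"
        using Y Z unfolding C_def by auto
      then show "AE \<omega> in M. \<omega>\<in>B \<longrightarrow> \<bar>t * Y \<omega> + (1 - t) * Z \<omega> - X \<omega>\<bar> < \<delta>"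
        by eventually_elim (use t in \<open>auto intro: conv_abs_lt\<close>)
    qed
    ultimately show "(\<lambda>\<omega>. t * Y \<omega> + (1 - t) * Z \<omega>) \<in> C" unfolding C_def by blast
  qed
  have XC: "X \<in> C" unfolding C_def using XS \<delta> by auto
  have openC: "open_rel (dist_L0 M) S C"
    unfolding open_rel_def
  proof (intro conjI CS ballI)
    fix Y assume Y: "Y \<in> C"
    have YS: "Y \<in> S" using Y CS by auto
    have Ym: "Y \<in> borel_measurable M" and Xm: "X \<in> borel_measurable M" using SB YS XS by auto
    have mf: "(\<lambda>\<omega>. \<bar>Y \<omega> - X \<omega>\<bar>) \<in> borel_measurable M" using Ym Xm by measurable
    have "\<forall>B\<in>F. \<exists>\<eta>>0. AE \<omega> in M. \<omega>\<in>B \<longrightarrow> \<bar>Y \<omega> - X \<omega>\<bar> < \<delta> - \<eta>"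
    proof
      fix B assume B: "B \<in> F"
      show "\<exists>\<eta>>0. AE \<omega> in M. \<omega>\<in>B \<longrightarrow> \<bar>Y \<omega> - X \<omega>\<bar> < \<delta> - \<eta>"
        by (rule atom_margin[OF Fat[OF B] mf]) (use Y B in \<open>auto simp: C_def\<close>)
    qed
    then obtain \<eta> where \<eta>: "\<And>B. B\<in>F \<Longrightarrow> \<eta> B > 0 \<and> (AE \<omega> in M. \<omega>\<in>B \<longrightarrow> \<bar>Y \<omega> - X \<omega>\<bar> < \<delta> - \<eta> B)"
      by metis
    define \<eta>0 where "\<eta>0 = Min (insert 1 (\<eta> ` F))"
    have \<eta>0: "\<eta>0 > 0" "\<eta>0 \<le> 1" "\<And>B. B\<in>F \<Longrightarrow> \<eta>0 \<le> \<eta> B"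
      unfolding \<eta>0_def using F(1) \<eta> by (auto simp: Min_gr_iff)
    define p where "p = Min (insert 1 (measure M ` F))"
    have p: "p > 0" "\<And>B. B\<in>F \<Longrightarrow> p \<le> measure M B"
      unfolding p_def using F(1) Fat by (auto simp: Min_gr_iff is_atom_def)
    have Yb: "AE \<omega> in M. \<omega>\<in>B \<longrightarrow> \<bar>Y \<omega> - X \<omega>\<bar> < \<delta> - \<eta>0" if B: "B\<in>F" for B
      using \<eta>[OF B] \<eta>0(3)[OF B] by (auto elim: eventually_mono)
    show "\<exists>r>0. {Z\<in>S. dist_L0 M Y Z < ennreal r} \<subseteq> C"
    proof (intro exI[of _ "\<eta>0 * p"] conjI subsetI)
      show "\<eta>0 * p > 0" using \<eta>0 p by simp
      fix Z assume "Z \<in> {Z\<in>S. dist_L0 M Y Z < ennreal (\<eta>0*p)}"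
      then have ZS: "Z\<in>S" and dZ: "dist_L0 M Y Z < ennreal (\<eta>0*p)" by auto
      have Zm: "Z \<in> borel_measurable M" using SB ZS by auto
      define E where "E = {\<omega>\<in>space M. \<eta>0 \<le> \<bar>Y \<omega> - Z \<omega>\<bar>}"
      have Es: "E \<in> sets M" unfolding E_def using Ym Zm by measurable
      have um: "(\<lambda>\<omega>. min 1 \<bar>Y \<omega> - Z \<omega>\<bar>) \<in> borel_measurable M" using Ym Zm by measurable
      have Dm: "(\<lambda>\<omega>. \<bar>Y \<omega> - Z \<omega>\<bar>) \<in> borel_measurable M" using Ym Zm by measurable
      have mk: "ennreal \<eta>0 * emeasure M E \<le> (\<integral>\<^sup>+\<omega>. ennreal (min 1 \<bar>Y \<omega> - Z \<omega>\<bar>) \<partial>M)"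
        unfolding E_def by (rule markov_aux[OF um Dm]) (use \<eta>0(2) in auto)
      have "ennreal (\<eta>0 * measure M E) = ennreal \<eta>0 * emeasure M E"
        using \<eta>0 by (simp add: emeasure_eq_measure ennreal_mult)
      also have "\<dots> \<le> dist_L0 M Y Z" using mk unfolding dist_L0_def .
      also have "\<dots> < ennreal (\<eta>0 * p)" by (rule dZ)
      finally have "\<eta>0 * measure M E < \<eta>0 * p" using \<eta>0 by (simp add: ennreal_less_iff)
      then have mE: "measure M E < p" using \<eta>0 by simp
      show "Z \<in> C" unfolding C_def
      proof (intro CollectI conjI ZS ballI)
        fix B assume B: "B \<in> F"
        have BEs: "B \<inter> E \<in> sets M" using Fs[OF B] Es by blast
        have "measure M (B \<inter> E) \<le> measure M E" using Es by (intro finite_measure_mono) auto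
        then have lt: "measure M (B \<inter> E) < measure M B" using mE p(2)[OF B] by linarith
        have "measure M (B \<inter> E) = 0 \<or> measure M (B \<inter> E) = measure M B"
          using Fat[OF B] BEs unfolding is_atom_def by blast
        then have "measure M (B \<inter> E) = 0" using lt by auto
        then have null: "B \<inter> E \<in> null_sets M" using BEs by (simp add: emeasure_eq_measure null_sets_def)
        have "AE \<omega> in M. \<omega> \<in> B \<longrightarrow> \<bar>Y \<omega> - Z \<omega>\<bar> < \<eta>0"
          by (rule AE_I'[OF null]) (auto simp: E_def not_less)
        then show "AE \<omega> in M. \<omega>\<in>B \<longrightarrow> \<bar>Z \<omega> - X \<omega>\<bar> < \<delta>" using Yb[OF B]
          by eventually_elim arith
      qed
    qed
  qed
  have CN: "C \<subseteq> N"
  proof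
    fix Y assume Y: "Y \<in> C"
    have YS: "Y \<in> S" using Y CS by auto
    have AEY: "AE \<omega> in M. \<forall>B\<in>F. \<omega>\<in>B \<longrightarrow> \<bar>Y \<omega> - X \<omega>\<bar> < \<delta>"
      using Y F(1) unfolding C_def by (intro AE_finite_allI) auto
    have m1: "(\<lambda>\<omega>. ennreal \<delta> * indicator U \<omega>) \<in> borel_measurable M" using Us by measurable
    have m2: "(\<lambda>\<omega>. indicator (space M - U) \<omega> :: ennreal) \<in> borel_measurable M" using Us by measurable
    have "dist_L0 M X Y \<le> (\<integral>\<^sup>+\<omega>. ennreal \<delta> * indicator U \<omega> + indicator (space M - U) \<omega> \<partial>M)"
      unfolding dist_L0_def
    proof (rule nn_integral_mono_AE)
      show "AE \<omega> in M. ennreal (min 1 \<bar>X \<omega> - Y \<omega>\<bar>) \<le> ennreal \<delta> * indicator U \<omega> + indicator (space M - U) \<omega>"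
        using AEY AE_space
      proof eventually_elim
        case (elim \<omega>)
        show ?case
        proof (cases "\<omega> \<in> U")
          case True
          then obtain B where "B\<in>F" "\<omega>\<in>B" unfolding U_def by auto
          then have "\<bar>Y \<omega> - X \<omega>\<bar> < \<delta>" using elim by auto
          then have "min 1 \<bar>X \<omega> - Y \<omega>\<bar> \<le> \<delta>" by (simp add: abs_minus_commute)
          then show ?thesis using True by (simp add: ennreal_leI)
        next
          case False
          then show ?thesis using elim by simp
        qed
      qed
    qed
    also have "\<dots> = ennreal \<delta> * emeasure M U + emeasure M (space M - U)"
      using Us m1 m2 by (simp add: nn_integral_add nn_integral_cmult_indicator)
    also have "\<dots> = ennreal (\<delta> * measure M U + (1 - measure M U))"
    proof -
      have h1: "0 \<le> 1 - measure M U" by simp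
      have h2: "0 \<le> \<delta> * measure M U" using \<delta> by simp
      have "ennreal \<delta> * emeasure M U + emeasure M (space M - U) = ennreal \<delta> * ennreal (measure M U) + ennreal (1 - measure M U)"
        using Us by (simp add: emeasure_eq_measure prob_compl)
      also have "\<dots> = ennreal (\<delta> * measure M U) + ennreal (1 - measure M U)"
        using \<delta> by (simp add: ennreal_mult)
      also have "\<dots> = ennreal (\<delta> * measure M U + (1 - measure M U))"
        by (rule ennreal_plus[OF h2 h1, symmetric])
      finally show ?thesis .
    qed
    also have "\<dots> < ennreal e"
    proof (rule ennreal_lessI[OF e(1)])
      have "measure M U \<le> 1" by simp
      then have "\<delta> * measure M U \<le> \<delta>" using \<delta> by (simp add: mult_left_le)
      then show "\<delta> * measure M U + (1 - measure M U) < e" using mU e(1) unfolding \<delta>_def by linarith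
    qed
    finally have "dist_L0 M X Y < ennreal e" .
    then show "Y \<in> N" using YS e V(4) by auto
  qed
  show "\<exists>C. convex_fun_set C \<and> nbhd_rel (dist_L0 M) (L0_plus M) X C \<and> C \<subseteq> N"
    using convC openC XC CS CN unfolding nbhd_rel_def S_def by blast
qed



lemma (in prob_space) gap_fin:
  assumes \<delta>: "\<delta> > 0" and gap: "\<And>B. B\<in>sets M \<Longrightarrow> measure M B > 0 \<Longrightarrow> measure M B \<ge> \<delta>"
  shows "finitely_many_atoms M"
proof -
  define P where "P F \<longleftrightarrow> finite F \<and> (\<forall>B\<in>F. is_atom M B) \<and> pairwise (\<lambda>B B'. measure M (B \<inter> B') = 0) F" for F
  have bound: "real (card F) * \<delta> \<le> 1" if PF: "P F" for F
  proof -
    have fin: "finite F" and at: "\<And>B. B\<in>F \<Longrightarrow> is_atom M B" and pw: "pairwise (\<lambda>B B'. measure M (B \<inter> B') = 0) F"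
      using PF unfolding P_def by auto
    have Fs: "\<And>B. B\<in>F \<Longrightarrow> B \<in> sets M" using at unfolding is_atom_def by auto
    have pw2: "pairwise (\<lambda>S T. AE x in M. x \<notin> S \<or> x \<notin> T) F"
      unfolding pairwise_def
    proof (intro ballI impI)
      fix S T assume S: "S \<in> F" and T: "T \<in> F" and "S \<noteq> T"
      then have "measure M (S \<inter> T) = 0" using pw unfolding pairwise_def by auto
      then have "S \<inter> T \<in> null_sets M" using Fs[OF S] Fs[OF T] by (simp add: emeasure_eq_measure null_sets_def)
      then have "AE x in M. x \<notin> S \<inter> T" by (rule AE_not_in)
      then show "AE x in M. x \<notin> S \<or> x \<notin> T" by auto
    qed
    have "measure M (\<Union>F) = (\<Sum>B\<in>F. measure M B)"
      using fin Fs pw2 by (intro measure_Union_AE) (auto simp: fmeasurable_eq_sets)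
    moreover have "(\<Sum>B\<in>F. measure M B) \<ge> (\<Sum>B\<in>F. \<delta>)"
      using at Fs by (intro sum_mono gap) (auto simp: is_atom_def)
    moreover have "measure M (\<Union>F) \<le> 1" by simp
    ultimately show ?thesis by simp
  qed
  obtain n :: nat where n: "1 / \<delta> < n" using reals_Archimedean2 by blast
  have bd: "\<forall>F. P F \<longrightarrow> card F < n"
  proof (intro allI impI)
    fix F assume "P F"
    then have "real (card F) * \<delta> \<le> 1" by (rule bound)
    then have "real (card F) \<le> 1 / \<delta>" using \<delta> by (simp add: field_simps)
    then show "card F < n" using n by linarith
  qed
  have "P {}" unfolding P_def by auto
  then obtain F where F: "P F" "\<And>F'. P F' \<Longrightarrow> card F' \<le> card F"
    using ex_has_greatest_nat[of P "{}" card n] bd by blast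
  have fin: "finite F" and at: "\<And>B. B\<in>F \<Longrightarrow> is_atom M B" and pw: "pairwise (\<lambda>B B'. measure M (B \<inter> B') = 0) F"
    using F(1) unfolding P_def by auto
  show ?thesis unfolding finitely_many_atoms_def
  proof (intro exI[of _ F] conjI ballI allI impI)
    show "finite F" by (rule fin)
    show "\<And>B. B \<in> F \<Longrightarrow> is_atom M B" by (rule at)
    fix A assume A: "is_atom M A"
    show "\<exists>B\<in>F. measure M (A - B) = 0 \<and> measure M (B - A) = 0"
    proof (rule ccontr)
      assume neg: "\<not> ?thesis"
      have As: "A \<in> sets M" using A unfolding is_atom_def by auto
      have disj: "measure M (A \<inter> B) = 0" if B: "B \<in> F" for B
      proof (rule ccontr)
        assume nz: "measure M (A \<inter> B) \<noteq> 0"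
        have Bs: "B \<in> sets M" using at[OF B] unfolding is_atom_def by auto
        have ABs: "A \<inter> B \<in> sets M" using As Bs by blast
        have "measure M (A \<inter> B) = measure M A" using A ABs nz unfolding is_atom_def by blast
        moreover have "measure M (B \<inter> A) = measure M B" using at[OF B] ABs nz unfolding is_atom_def
          by (metis Int_commute inf_le1)
        ultimately have "measure M (A - B) = 0" "measure M (B - A) = 0"
          using finite_measure_Diff'[OF As Bs] finite_measure_Diff'[OF Bs As] by (auto simp: Int_commute)
        then show False using neg B by blast
      qed
      have AF: "A \<notin> F"
      proof
        assume "A \<in> F"
        then show False using neg by auto
      qed
      have "P (insert A F)"
        unfolding P_def using fin at A pw disj AF
        by (auto simp: pairwise_insert Int_commute)
      then have "card (insert A F) \<le> card F" by (rule F(2))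
      then show False using fin AF by simp
    qed
  qed
qed



lemma (in prob_space) fin_gap:
  assumes PA: "purely_atomic M" and FA: "finitely_many_atoms M" and Q: "equivalent_prob Q M"
  shows "\<exists>\<delta>>0. \<forall>B\<in>sets M. emeasure M B \<noteq> 0 \<longrightarrow> measure Q B \<ge> \<delta>"
proof -
  interpret Q: prob_space Q using Q unfolding equivalent_prob_def by auto
  have sQ: "sets Q = sets M" using Q unfolding equivalent_prob_def by auto
  have nQ: "\<And>A. A \<in> sets M \<Longrightarrow> emeasure Q A = 0 \<longleftrightarrow> emeasure M A = 0"
    using Q unfolding equivalent_prob_def by auto
  obtain F where F: "finite F" "\<And>B. B\<in>F \<Longrightarrow> is_atom M B"
    "\<And>A. is_atom M A \<Longrightarrow> \<exists>B\<in>F. measure M (A - B) = 0 \<and> measure M (B - A) = 0"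
    using FA unfolding finitely_many_atoms_def by blast
  have Fs: "\<And>B. B\<in>F \<Longrightarrow> B \<in> sets M" using F(2) unfolding is_atom_def by auto
  have Fpos: "measure Q B > 0" if B: "B \<in> F" for B
  proof -
    have "measure M B > 0" using F(2)[OF B] unfolding is_atom_def by auto
    then have "emeasure M B \<noteq> 0" by (simp add: emeasure_eq_measure)
    then have "emeasure Q B \<noteq> 0" using nQ Fs[OF B] by auto
    then show ?thesis by (simp add: Q.emeasure_eq_measure zero_less_measure_iff)
  qed
  define \<delta> where "\<delta> = Min (insert 1 (measure Q ` F))"
  have \<delta>: "\<delta> > 0" "\<And>B. B\<in>F \<Longrightarrow> \<delta> \<le> measure Q B"
    unfolding \<delta>_def using F(1) Fpos by (auto simp: Min_gr_iff)
  show ?thesis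
  proof (intro exI[of _ \<delta>] conjI ballI impI)
    show "\<delta> > 0" by (rule \<delta>(1))
    fix B assume B: "B \<in> sets M" "emeasure M B \<noteq> 0"
    then have "measure M B > 0" by (simp add: emeasure_eq_measure zero_less_measure_iff)
    then obtain A where A: "A \<subseteq> B" "is_atom M A" using PA B unfolding purely_atomic_def by blast
    have As: "A \<in> sets M" using A unfolding is_atom_def by auto
    obtain B0 where B0: "B0 \<in> F" "measure M (B0 - A) = 0" using F(3)[OF A(2)] by blast
    have B0s: "B0 - A \<in> sets M" using Fs[OF B0(1)] As by blast
    have "emeasure M (B0 - A) = 0" using B0(2) by (simp add: emeasure_eq_measure)
    then have "emeasure Q (B0 - A) = 0" using nQ B0s by auto
    then have q0: "measure Q (B0 - A) = 0" by (simp add: Q.emeasure_eq_measure)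
    have "measure Q (B0 - A) = measure Q B0 - measure Q (B0 \<inter> A)"
      using Fs[OF B0(1)] As sQ by (intro Q.finite_measure_Diff') auto
    then have "measure Q B0 = measure Q (B0 \<inter> A)" using q0 by simp
    also have "\<dots> \<le> measure Q A" using As sQ by (intro Q.finite_measure_mono) auto
    also have "\<dots> \<le> measure Q B" using A(1) B(1) sQ by (intro Q.finite_measure_mono) auto
    finally show "\<delta> \<le> measure Q B" using \<delta>(2)[OF B0(1)] by linarith
  qed
qed

lemma transfer:
  fixes D u v :: "'a \<Rightarrow> real"
  assumes R1: "prob_space R1" and R2: "prob_space R2" and sets: "sets R2 = sets R1"
  and null: "\<And>B. B \<in> sets R1 \<Longrightarrow> emeasure R1 B = 0 \<Longrightarrow> emeasure R2 B = 0"
  and \<delta>: "\<delta> > 0" and gap: "\<And>B. B \<in> sets R1 \<Longrightarrow> emeasure R1 B \<noteq> 0 \<Longrightarrow> measure R1 B \<ge> \<delta>"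
  and D: "D \<in> borel_measurable R1" and u: "u \<in> borel_measurable R1" and \<eta>: "0 < \<eta>"
  and hu: "\<And>\<omega>. \<omega> \<in> space R1 \<Longrightarrow> \<eta> \<le> D \<omega> \<Longrightarrow> \<eta> \<le> u \<omega>"
  and hv: "\<And>\<omega>. \<omega> \<in> space R1 \<Longrightarrow> v \<omega> \<le> D \<omega>"
  and lt: "(\<integral>\<^sup>+\<omega>. ennreal (u \<omega>) \<partial>R1) < ennreal (\<delta> * \<eta>)"
  shows "(\<integral>\<^sup>+\<omega>. ennreal (v \<omega>) \<partial>R2) \<le> ennreal \<eta>"
proof -
  interpret R1: prob_space R1 by (rule R1)
  interpret R2: prob_space R2 by (rule R2)
  have sp: "space R2 = space R1" using sets by (rule sets_eq_imp_space_eq)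
  define E where "E = {\<omega>\<in>space R1. \<eta> \<le> D \<omega>}"
  have Es: "E \<in> sets R1" unfolding E_def using D by measurable
  have mk: "ennreal \<eta> * emeasure R1 E \<le> (\<integral>\<^sup>+\<omega>. ennreal (u \<omega>) \<partial>R1)"
    unfolding E_def by (rule markov_aux[OF u D hu])
  have E0: "emeasure R1 E = 0"
  proof (rule ccontr)
    assume "emeasure R1 E \<noteq> 0"
    then have "measure R1 E \<ge> \<delta>" using gap Es by auto
    then have "ennreal (\<delta> * \<eta>) \<le> ennreal (\<eta> * measure R1 E)" using \<eta> by (intro ennreal_leI) (simp add: mult.commute)
    also have "\<dots> = ennreal \<eta> * emeasure R1 E" using \<eta> by (simp add: R1.emeasure_eq_measure ennreal_mult)
    also have "\<dots> < ennreal (\<delta> * \<eta>)" using mk lt by (rule le_less_trans)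
    finally show False by simp
  qed
  then have "emeasure R2 E = 0" using null Es by auto
  then have "E \<in> null_sets R2" using Es sets by (simp add: null_sets_def)
  then have AE: "AE \<omega> in R2. \<omega> \<notin> E" by (rule AE_not_in)
  have "(\<integral>\<^sup>+\<omega>. ennreal (v \<omega>) \<partial>R2) \<le> (\<integral>\<^sup>+\<omega>. ennreal \<eta> \<partial>R2)"
  proof (rule nn_integral_mono_AE)
    show "AE \<omega> in R2. ennreal (v \<omega>) \<le> ennreal \<eta>"
      using AE AE_space
    proof eventually_elim
      case (elim \<omega>)
      then have "\<omega> \<in> space R1" "\<not> \<eta> \<le> D \<omega>" using sp unfolding E_def by auto
      then have "v \<omega> \<le> \<eta>" using hv by force
      then show ?case by (rule ennreal_leI)
    qed
  qed
  also have "\<dots> = ennreal \<eta>" by (simp add: R2.emeasure_space_1)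
  finally show ?thesis .
qed

lemma open_rel_transfer:
  assumes "\<And>e. e > 0 \<Longrightarrow> \<exists>e'>0. \<forall>X\<in>S. \<forall>Y\<in>S. d2 X Y < ennreal e' \<longrightarrow> d1 X Y < ennreal e"
    and "open_rel d1 S U"
  shows "open_rel d2 S U"
  unfolding open_rel_def
proof (intro conjI ballI)
  show "U \<subseteq> S" using assms(2) unfolding open_rel_def by auto
  fix X assume X: "X \<in> U"
  then obtain e where e: "e > 0" "{Y \<in> S. d1 X Y < ennreal e} \<subseteq> U" using assms(2) unfolding open_rel_def by blast
  obtain e' where e': "e' > 0" "\<forall>X\<in>S. \<forall>Y\<in>S. d2 X Y < ennreal e' \<longrightarrow> d1 X Y < ennreal e" using assms(1)[OF e(1)] by blast
  have XS: "X \<in> S" using X \<open>U \<subseteq> S\<close> by auto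
  show "\<exists>e>0. {Y \<in> S. d2 X Y < ennreal e} \<subseteq> U"
    using e e' XS by (intro exI[of _ e']) auto
qed

lemma (in prob_space) coincide:
  assumes Q: "equivalent_prob Q M"
    and g1: "\<delta>1 > 0" "\<forall>B\<in>sets M. emeasure M B \<noteq> 0 \<longrightarrow> measure M B \<ge> \<delta>1"
    and g2: "\<delta>2 > 0" "\<forall>B\<in>sets M. emeasure M B \<noteq> 0 \<longrightarrow> measure Q B \<ge> \<delta>2"
  shows "topologies_coincide_L0_L1 M Q"
proof -
  have PQ: "prob_space Q" and sQ: "sets Q = sets M" and nQ: "\<And>A. A \<in> sets M \<Longrightarrow> emeasure Q A = 0 \<longleftrightarrow> emeasure M A = 0"
    using Q unfolding equivalent_prob_def by auto
  define S where "S = L0_plus M"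
  have SB: "\<And>Y. Y\<in>S \<Longrightarrow> Y \<in> borel_measurable M" unfolding S_def L0_plus_def by auto
  have SBQ: "\<And>Y. Y\<in>S \<Longrightarrow> Y \<in> borel_measurable Q" using SB measurable_cong_sets[OF sQ refl] by auto
  have spQ: "space Q = space M" using sQ by (rule sets_eq_imp_space_eq)
  have a: "\<exists>e'>0. \<forall>X\<in>S. \<forall>Y\<in>S. dist_L0 M X Y < ennreal e' \<longrightarrow> dist_L1 Q X Y < ennreal e" if e: "e > 0" for e
  proof (intro exI[of _ "\<delta>1 * min 1 (e/2)"] conjI ballI impI)
    show "\<delta>1 * min 1 (e/2) > 0" using g1 e by simp
    fix X Y assume XY: "X \<in> S" "Y \<in> S" and lt: "dist_L0 M X Y < ennreal (\<delta>1 * min 1 (e / 2))"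
    have Xm: "X \<in> borel_measurable M" "Y \<in> borel_measurable M" using SB XY by auto
    have "(\<integral>\<^sup>+\<omega>. ennreal \<bar>X \<omega> - Y \<omega>\<bar> \<partial>Q) \<le> ennreal (min 1 (e/2))"
    proof (rule transfer[where D="\<lambda>\<omega>. \<bar>X \<omega> - Y \<omega>\<bar>", OF prob_space_axioms PQ sQ _ g1(1) _ _ _ _ _ _ lt[unfolded dist_L0_def]])
      show "\<And>B. B \<in> sets M \<Longrightarrow> emeasure M B = 0 \<Longrightarrow> emeasure Q B = 0" using nQ by auto
      show "\<And>B. B \<in> sets M \<Longrightarrow> emeasure M B \<noteq> 0 \<Longrightarrow> \<delta>1 \<le> measure M B" using g1 by auto
      show "(\<lambda>\<omega>. \<bar>X \<omega> - Y \<omega>\<bar>) \<in> borel_measurable M" using Xm by measurable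
      show "(\<lambda>\<omega>. min 1 \<bar>X \<omega> - Y \<omega>\<bar>) \<in> borel_measurable M" using Xm by measurable
      show "0 < min 1 (e/2)" using e by simp
    qed auto
    also have "\<dots> < ennreal e" using e by (intro ennreal_lessI) auto
    finally show "dist_L1 Q X Y < ennreal e" unfolding dist_L1_def .
  qed
  have b: "\<exists>e'>0. \<forall>X\<in>S. \<forall>Y\<in>S. dist_L1 Q X Y < ennreal e' \<longrightarrow> dist_L0 M X Y < ennreal e" if e: "e > 0" for e
  proof (intro exI[of _ "\<delta>2 * (e/2)"] conjI ballI impI)
    show "\<delta>2 * (e/2) > 0" using g2 e by simp
    fix X Y assume XY: "X \<in> S" "Y \<in> S" and lt: "dist_L1 Q X Y < ennreal (\<delta>2 * (e / 2))"
    have Xm: "X \<in> borel_measurable Q" "Y \<in> borel_measurable Q" using SBQ XY by auto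
    have "(\<integral>\<^sup>+\<omega>. ennreal (min 1 \<bar>X \<omega> - Y \<omega>\<bar>) \<partial>M) \<le> ennreal (e/2)"
    proof (rule transfer[where D="\<lambda>\<omega>. \<bar>X \<omega> - Y \<omega>\<bar>", OF PQ prob_space_axioms sQ[symmetric] _ g2(1) _ _ _ _ _ _ lt[unfolded dist_L1_def]])
      show "\<And>B. B \<in> sets Q \<Longrightarrow> emeasure Q B = 0 \<Longrightarrow> emeasure M B = 0" using nQ sQ by auto
      show "\<And>B. B \<in> sets Q \<Longrightarrow> emeasure Q B \<noteq> 0 \<Longrightarrow> \<delta>2 \<le> measure Q B" using g2 nQ sQ by auto
      show "(\<lambda>\<omega>. \<bar>X \<omega> - Y \<omega>\<bar>) \<in> borel_measurable Q" using Xm by measurable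
      show "(\<lambda>\<omega>. \<bar>X \<omega> - Y \<omega>\<bar>) \<in> borel_measurable Q" using Xm by measurable
      show "0 < e/2" using e by simp
    qed auto
    also have "\<dots> < ennreal e" using e by (intro ennreal_lessI) auto
    finally show "dist_L0 M X Y < ennreal e" unfolding dist_L0_def .
  qed
  show ?thesis unfolding topologies_coincide_L0_L1_def S_def[symmetric]
  proof (intro allI iffI)
    fix U
    show "open_rel (dist_L0 M) S U \<Longrightarrow> open_rel (dist_L1 Q) S U" by (rule open_rel_transfer[OF b])
    show "open_rel (dist_L1 Q) S U \<Longrightarrow> open_rel (dist_L0 M) S U" by (rule open_rel_transfer[OF a])
  qed
qed



lemma (in prob_space) not_fin_not_coincide:
  assumes NF: "\<not> finitely_many_atoms M" and Q: "equivalent_prob Q M"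
  shows "\<not> topologies_coincide_L0_L1 M Q"
proof
  assume co: "topologies_coincide_L0_L1 M Q"
  have PQ: "prob_space Q" and sQ: "sets Q = sets M" and nQ: "\<And>A. A \<in> sets M \<Longrightarrow> emeasure Q A = 0 \<longleftrightarrow> emeasure M A = 0"
    using Q unfolding equivalent_prob_def by auto
  interpret Q: prob_space Q by (rule PQ)
  have small: "\<exists>B\<in>sets M. 0 < measure M B \<and> measure M B < e" if e: "e > 0" for e
  proof (rule ccontr)
    assume "\<not> ?thesis"
    then have "\<And>B. B\<in>sets M \<Longrightarrow> measure M B > 0 \<Longrightarrow> measure M B \<ge> e" by (auto simp: not_less)
    then have "finitely_many_atoms M" by (rule gap_fin[OF e])
    then show False using NF by simp
  qed
  define S where "S = L0_plus M"
  define z where "z = (\<lambda>_::'a. 0::real)"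
  have zS: "z \<in> S" unfolding S_def L0_plus_def z_def by auto
  have SB: "\<And>Y. Y\<in>S \<Longrightarrow> Y \<in> borel_measurable M" unfolding S_def L0_plus_def by auto
  have SBQ: "\<And>Y. Y\<in>S \<Longrightarrow> Y \<in> borel_measurable Q" using SB measurable_cong_sets[OF sQ refl] by auto
  have triQ: "\<And>x y w. x\<in>S \<Longrightarrow> y\<in>S \<Longrightarrow> w\<in>S \<Longrightarrow> dist_L1 Q x w \<le> dist_L1 Q x y + dist_L1 Q y w"
    using SBQ by (intro dist_L1_triangle) auto
  define U where "U = {Y\<in>S. dist_L1 Q z Y < ennreal 1}"
  have "open_rel (dist_L1 Q) S U" unfolding U_def by (rule ball_open[OF triQ zS])
  then have oU: "open_rel (dist_L0 M) S U" using co unfolding topologies_coincide_L0_L1_def S_def by blast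
  have zU: "z \<in> U" unfolding U_def using zS by (simp add: dist_L1_def z_def)
  obtain e where e: "e > 0" "{Y\<in>S. dist_L0 M z Y < ennreal e} \<subseteq> U" using oU zU unfolding open_rel_def by blast
  obtain B where B: "B \<in> sets M" "0 < measure M B" "measure M B < e" using small[OF e(1)] by blast
  have "emeasure M B \<noteq> 0" using B by (simp add: emeasure_eq_measure)
  then have "emeasure Q B \<noteq> 0" using nQ B(1) by auto
  then have qpos: "measure Q B > 0" by (simp add: Q.emeasure_eq_measure zero_less_measure_iff)
  define c where "c = 1 / measure Q B"
  have c: "c \<ge> 0" "c * measure Q B = 1" unfolding c_def using qpos by auto
  define Y where "Y = (\<lambda>\<omega>. c * indicator B \<omega> :: real)"
  have YS: "Y \<in> S" unfolding S_def L0_plus_def Y_def using B(1) c(1) by auto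
  have "dist_L0 M z Y \<le> (\<integral>\<^sup>+\<omega>. indicator B \<omega> \<partial>M)"
    unfolding dist_L0_def z_def Y_def
    by (intro nn_integral_mono) (auto split: split_indicator)
  also have "\<dots> = ennreal (measure M B)" using B by (simp add: emeasure_eq_measure)
  also have "\<dots> < ennreal e" using B e by (simp add: ennreal_lessI)
  finally have "Y \<in> U" using YS e(2) by auto
  then have lt: "dist_L1 Q z Y < ennreal 1" unfolding U_def by auto
  have "dist_L1 Q z Y = (\<integral>\<^sup>+\<omega>. ennreal c * indicator B \<omega> \<partial>Q)"
    unfolding dist_L1_def z_def Y_def
    by (intro nn_integral_cong) (use c(1) in \<open>auto split: split_indicator\<close>)
  also have "\<dots> = ennreal c * emeasure Q B" using B sQ by (simp add: nn_integral_cmult_indicator)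
  also have "\<dots> = ennreal (c * measure Q B)" using c(1) by (simp add: Q.emeasure_eq_measure ennreal_mult)
  also have "\<dots> = ennreal 1" using c(2) by simp
  finally show False using lt by simp
qed

theorem proposition3p3:
  fixes M :: "'a measure"
  assumes "prob_space M"
  shows "(L0_plus_locally_convex M \<longleftrightarrow> purely_atomic M)
    \<and> (purely_atomic M \<longrightarrow>
         ((\<exists>Q. equivalent_prob Q M \<and> topologies_coincide_L0_L1 M Q) \<longleftrightarrow> finitely_many_atoms M))
    \<and> (purely_atomic M \<and> finitely_many_atoms M \<longrightarrow>
         (\<forall>Q. equivalent_prob Q M \<longrightarrow> topologies_coincide_L0_L1 M Q))"
proof -
  interpret prob_space M by (rule assms)
  have P1: "L0_plus_locally_convex M \<longleftrightarrow> purely_atomic M" using pa_lc not_pa_not_lc by blast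
  have MM: "equivalent_prob M M" unfolding equivalent_prob_def using assms by auto
  have P3: "purely_atomic M \<and> finitely_many_atoms M \<longrightarrow> (\<forall>Q. equivalent_prob Q M \<longrightarrow> topologies_coincide_L0_L1 M Q)"
  proof (intro impI allI)
    fix Q assume PF: "purely_atomic M \<and> finitely_many_atoms M" and Q: "equivalent_prob Q M"
    obtain \<delta>1 where d1: "\<delta>1 > 0" "\<forall>B\<in>sets M. emeasure M B \<noteq> 0 \<longrightarrow> measure M B \<ge> \<delta>1"
      using fin_gap[OF _ _ MM] PF by blast
    obtain \<delta>2 where d2: "\<delta>2 > 0" "\<forall>B\<in>sets M. emeasure M B \<noteq> 0 \<longrightarrow> measure Q B \<ge> \<delta>2"
      using fin_gap[OF _ _ Q] PF by blast
    show "topologies_coincide_L0_L1 M Q" by (rule coincide[OF Q d1 d2])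
  qed
  have P2: "purely_atomic M \<longrightarrow> ((\<exists>Q. equivalent_prob Q M \<and> topologies_coincide_L0_L1 M Q) \<longleftrightarrow> finitely_many_atoms M)"
    using P3 MM not_fin_not_coincide by blast
  show ?thesis using P1 P2 P3 by blast
qed


end
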